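(* Consider $\ell$ i.i.d. samples from the structural equation model of the context with $N_y\sim\mathcal{N}(0,\sigma_y^2)$, $\sigma_y>0$, and suppose the null hypothesis $H_0:\beta=0$ holds. Let $S_1,\dots,S_m\subseteq\{1,\dots,q\}$, let $\hat\gamma\in\mathbb{R}^q$ be an estimate of $\gamma$ that is held fixed (conditioned upon, not depending on $\mathbf{N}_y$), and let $\pi_1,\dots,\pi_M$ be independent uniformly random permutations of $\{1,\dots,\ell\}$, independent of the data. Let $p$ be the p-value produced by the permutation test described in the context. Then $$\mathbb{P}\big(p\le\alpha\,\big|\,\mathbf{X},\mathbf{W},\gamma,\hat\gamma\big)\le\alpha+\frac{\sqrt{M}\,\|\mathbf{W}(\gamma-\hat\gamma)\|}{2\sigma_y}\quad\text{for all }\alpha\in(0,1).$$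
   Context: Structural equation model: zero-mean mutually independent noises $N_z\in\mathbb{R}^r$, $N_w\in\mathbb{R}^q$, $N_x\in\mathbb{R}^d$, $N_y\in\mathbb{R}$ with diagonal covariances; $Z=N_z$, $W=\mathbf{A}Z+N_w$, $X=\mathbf{B}Z+N_x$, $Y=\beta^\top X+\gamma^\top W+N_y$, with $\mathbf{A}\in\mathbb{R}^{q\times r}$, $\mathbf{B}\in\mathbb{R}^{d\times r}$, $\beta\in\mathbb{R}^d$, $\gamma\in\mathbb{R}^q$. Data: $\ell$ i.i.d. draws $(y_i,x_i,w_i,n_{y,i})$, stacked as $\mathbf{Y}\in\mathbb{R}^\ell$, $\mathbf{X}\in\mathbb{R}^{\ell\times d}$, $\mathbf{W}\in\mathbb{R}^{\ell\times q}$, $\mathbf{N}_y\in\mathbb{R}^\ell$; $\mathbf{W}_S$ denotes the columns of $\mathbf{W}$ indexed by $S$. For a response vector $\mathbf{Y}'\in\mathbb{R}^\ell$ and $S$, $\hat\beta(S;\mathbf{Y}')\in\mathbb{R}^d$ denotes the coefficients of $\mathbf{X}$ in the ordinary least-squares regression of $\mathbf{Y}'$ on $[\mathbf{X},\mathbf{W}_S]$. Stability statistic: $\mathcal{V}(v_1,\dots,v_m)=1-\frac{\|m^{-1}\sum_{j}v_j\|^2}{m^{-1}\sum_j\|v_j\|^2}$. Permutation test: set $\mathcal{V}_0=\mathcal{V}(\hat\beta(S_1;\mathbf{Y}),\dots,\hat\beta(S_m;\mathbf{Y}))$. Let $\hat{\mathbf{N}}=\mathbf{Y}-\mathbf{W}\hat\gamma=(\hat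 n_1,\dots,\hat n_\ell)^\top$ and, for a permutation $\pi$, $\hat{\mathbf{N}}^\pi=(\hat n_{\pi(1)},\dots,\hat n_{\pi(\ell)})^\top$ and $\hat{\mathbf{Y}}(\pi)=\mathbf{W}\hat\gamma+\hat{\mathbf{N}}^\pi$. For $i=1,\dots,M$ set $\mathcal{V}_i=\mathcal{V}(\hat\beta(S_1;\hat{\mathbf{Y}}(\pi_i)),\dots,\hat\beta(S_m;\hat{\mathbf{Y}}(\pi_i)))$. The p-value is $p=\big(\sum_{i=1}^M\mathbf{1}\{\mathcal{V}_i\ge\mathcal{V}_0\}+1\big)/(M+1)$. *)

theory Defs
  imports "HOL-Probability.Probability"
begin

text \<open>The sample index set, the X-coordinates and the W-coordinates are
finite types 'l, 'd, 'q (so ell = CARD('l), d = CARD('d), q = CARD('q)).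
Data matrices are functions: X i k is row i, column k.\<close>

definition mat_vec :: "('l \<Rightarrow> 'c::finite \<Rightarrow> real) \<Rightarrow> ('c \<Rightarrow> real) \<Rightarrow> 'l \<Rightarrow> real" where
  "mat_vec A v = (\<lambda>i. \<Sum>k\<in>UNIV. A i k * v k)"

definition vnorm :: "('a::finite \<Rightarrow> real) \<Rightarrow> real" where
  "vnorm v = sqrt (\<Sum>i\<in>UNIV. (v i)\<^sup>2)"

definition rss :: "('l::finite \<Rightarrow> 'd::finite \<Rightarrow> real) \<Rightarrow> ('l \<Rightarrow> 'q::finite \<Rightarrow> real) \<Rightarrow> 'q set
    \<Rightarrow> ('l \<Rightarrow> real) \<Rightarrow> ('d \<Rightarrow> real) \<Rightarrow> ('q \<Rightarrow> real) \<Rightarrow> real" where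
  "rss X W S Y' b c = (\<Sum>i\<in>UNIV. (Y' i - (\<Sum>k\<in>UNIV. X i k * b k) - (\<Sum>k\<in>S. W i k * c k))\<^sup>2)"

definition ls_sols :: "('l::finite \<Rightarrow> 'd::finite \<Rightarrow> real) \<Rightarrow> ('l \<Rightarrow> 'q::finite \<Rightarrow> real) \<Rightarrow> 'q set
    \<Rightarrow> ('l \<Rightarrow> real) \<Rightarrow> (('d \<Rightarrow> real) \<times> ('q \<Rightarrow> real)) set" where
  "ls_sols X W S Y' = {(b, c). (\<forall>k. k \<notin> S \<longrightarrow> c k = 0) \<and>
      (\<forall>b' c'. (\<forall>k. k \<notin> S \<longrightarrow> c' k = 0) \<longrightarrow> rss X W S Y' b c \<le> rss X W S Y' b' c')}"

text \<open>OLS coefficients of X: the X-part of the (minimum-norm) least-squares solution;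
this is the usual OLS estimate whenever [X, W_S] has full column rank.\<close>
definition ols_beta :: "('l::finite \<Rightarrow> 'd::finite \<Rightarrow> real) \<Rightarrow> ('l \<Rightarrow> 'q::finite \<Rightarrow> real) \<Rightarrow> 'q set
    \<Rightarrow> ('l \<Rightarrow> real) \<Rightarrow> 'd \<Rightarrow> real" where
  "ols_beta X W S Y' = fst (THE bc. bc \<in> ls_sols X W S Y' \<and>
      (\<forall>bc' \<in> ls_sols X W S Y'.
         (\<Sum>k\<in>UNIV. (fst bc k)\<^sup>2) + (\<Sum>k\<in>UNIV. (snd bc k)\<^sup>2)
         \<le> (\<Sum>k\<in>UNIV. (fst bc' k)\<^sup>2) + (\<Sum>k\<in>UNIV. (snd bc' k)\<^sup>2)))"

definition stab :: "(nat \<Rightarrow> 'd::finite \<Rightarrow> real) \<Rightarrow> nat \<Rightarrow> real" where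
  "stab v m = 1 - (\<Sum>k\<in>UNIV. ((1 / real m) * (\<Sum>j<m. v j k))\<^sup>2)
                   / ((1 / real m) * (\<Sum>j<m. \<Sum>k\<in>UNIV. (v j k)\<^sup>2))"

definition perm_Y :: "('l::finite \<Rightarrow> 'q::finite \<Rightarrow> real) \<Rightarrow> ('q \<Rightarrow> real) \<Rightarrow> ('l \<Rightarrow> real)
    \<Rightarrow> ('l \<Rightarrow> 'l) \<Rightarrow> 'l \<Rightarrow> real" where
  "perm_Y W gh Y \<pi> = (\<lambda>i. mat_vec W gh i + (Y (\<pi> i) - mat_vec W gh (\<pi> i)))"

definition perm_pval :: "('l::finite \<Rightarrow> 'd::finite \<Rightarrow> real) \<Rightarrow> ('l \<Rightarrow> 'q::finite \<Rightarrow> real)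
    \<Rightarrow> (nat \<Rightarrow> 'q set) \<Rightarrow> nat \<Rightarrow> ('q \<Rightarrow> real) \<Rightarrow> nat \<Rightarrow> ('l \<Rightarrow> real)
    \<Rightarrow> (nat \<Rightarrow> 'l \<Rightarrow> 'l) \<Rightarrow> real" where
  "perm_pval X W S m gh M Y pis =
     (let V0 = stab (\<lambda>j. ols_beta X W (S j) Y) m;
          V = (\<lambda>i. stab (\<lambda>j. ols_beta X W (S j) (perm_Y W gh Y (pis i))) m)
      in (real (card {i. i < M \<and> V i \<ge> V0}) + 1) / (real M + 1))"

definition gauss_noise :: "real \<Rightarrow> ('l::finite \<Rightarrow> real) measure" where
  "gauss_noise \<sigma> = PiM UNIV (\<lambda>_. density lborel (normal_density 0 \<sigma>))"

definition perm_dist :: "nat \<Rightarrow> (nat \<Rightarrow> 'l::finite \<Rightarrow> 'l) measure" where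
  "perm_dist M = PiM {..<M} (\<lambda>_. measure_pmf (pmf_of_set {\<pi>. \<pi> permutes (UNIV :: 'l set)}))"

end

theory Submission
  imports Defs
begin

lemma rank_count:
  fixes v :: "'a \<Rightarrow> real"
  assumes "finite I" "c \<ge> 0"
  shows "real (card {j\<in>I. real (card {i\<in>I. v j \<le> v i}) \<le> c}) \<le> c"
proof (cases "{j\<in>I. real (card {i\<in>I. v j \<le> v i}) \<le> c} = {}")
  case True then show ?thesis using assms by (subst True) simp
next
  case False
  define J where "J = {j\<in>I. real (card {i\<in>I. v j \<le> v i}) \<le> c}"
  have fJ: "finite J" using assms unfolding J_def by simp
  obtain j0 where j0: "j0 \<in> J" "\<And>j. j \<in> J \<Longrightarrow> v j0 \<le> v j"
    using ex_min_if_finite[of "v ` J"] False fJ unfolding J_def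
    by (metis (no_types, lifting) J_def empty_is_image finite_imageI imageE image_eqI linorder_le_less_linear order_less_imp_le ex_min_if_finite)
  have "J \<subseteq> {i\<in>I. v j0 \<le> v i}" using j0 unfolding J_def by auto
  then have "card J \<le> card {i\<in>I. v j0 \<le> v i}" using assms by (intro card_mono) auto
  moreover have "real (card {i\<in>I. v j0 \<le> v i}) \<le> c" using j0 unfolding J_def by auto
  ultimately show ?thesis unfolding J_def by linarith
qed


lemma card_perm_reindex:
  assumes "t permutes A" "finite A"
  shows "card {i\<in>A. Q (t i)} = card {i\<in>A. Q i}"
proof -
  have "t ` {i\<in>A. Q (t i)} = {i\<in>A. Q i}"
  proof
    show "t ` {i\<in>A. Q (t i)} \<subseteq> {i\<in>A. Q i}" using assms permutes_in_image by fastforce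
    show "{i\<in>A. Q i} \<subseteq> t ` {i\<in>A. Q (t i)}"
    proof
      fix y assume y: "y \<in> {i\<in>A. Q i}"
      have "inv t y \<in> A" using y assms by (metis mem_Collect_eq permutes_in_image permutes_inverses(1))
      moreover have "t (inv t y) = y" using assms permutes_inverses(1) by metis
      ultimately show "y \<in> t ` {i\<in>A. Q (t i)}" using y by (metis (mono_tags, lifting) image_eqI mem_Collect_eq)
    qed
  qed
  moreover have "inj_on t {i\<in>A. Q (t i)}" using permutes_inj[OF assms(1)] by (simp add: inj_on_def inj_def)
  ultimately show ?thesis by (metis card_image)
qed

lemma swap_count:
  fixes U :: "'b \<Rightarrow> real" and P :: "'b set" and j M :: nat
  assumes "j \<le> M"
  defines "E \<equiv> PiE {..M} (\<lambda>_. P)"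
  shows "card {r\<in>E. real (card {i\<in>{..M}. U (r 0) \<le> U (r i)}) \<le> c}
       = card {r\<in>E. real (card {i\<in>{..M}. U (r j) \<le> U (r i)}) \<le> c}"
proof -
  define t where "t = Transposition.transpose (0::nat) j"
  have tp: "t permutes {..M}" unfolding t_def using assms by (intro permutes_swap_id) auto
  have tt: "t \<circ> t = id" unfolding t_def by simp
  have t0: "t 0 = j" and tj: "t j = 0" unfolding t_def by simp_all
  have key: "card {i\<in>{..M}. U (r (t 0)) \<le> U (r (t i))} = card {i\<in>{..M}. U (r j) \<le> U (r i)}" for r
    unfolding t0 by (rule card_perm_reindex[OF tp, of "\<lambda>i. U (r j) \<le> U (r i)"]) simp
  have mapE: "r \<circ> t \<in> E" if "r \<in> E" for r
  proof -
    have "\<And>i. i \<in> {..M} \<Longrightarrow> (r \<circ> t) i \<in> P" using that tp unfolding E_def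
      by (simp add: PiE_iff) (metis atMost_iff permutes_in_image)
    moreover have "\<And>i. i \<notin> {..M} \<Longrightarrow> (r \<circ> t) i = undefined" using that tp unfolding E_def
    proof -
      fix i assume i: "i \<notin> {..M}"
      then have "t i = i" using tp permutes_not_in by metis
      moreover have "r i = undefined" using that i unfolding E_def by (rule PiE_arb)
      ultimately show "(r \<circ> t) i = undefined" by simp
    qed
    ultimately show ?thesis unfolding E_def by (rule PiE_I)
  qed
  have "bij_betw (\<lambda>r. r \<circ> t) {r\<in>E. real (card {i\<in>{..M}. U (r j) \<le> U (r i)}) \<le> c}
          {r\<in>E. real (card {i\<in>{..M}. U (r 0) \<le> U (r i)}) \<le> c}"
  proof (rule bij_betwI[where g="\<lambda>r. r \<circ> t"])
    show "(\<lambda>r. r \<circ> t) \<in> {r\<in>E. real (card {i\<in>{..M}. U (r j) \<le> U (r i)}) \<le> c} \<rightarrow>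
          {r\<in>E. real (card {i\<in>{..M}. U (r 0) \<le> U (r i)}) \<le> c}"
    proof
      fix r assume r: "r \<in> {r\<in>E. real (card {i\<in>{..M}. U (r j) \<le> U (r i)}) \<le> c}"
      have rE: "r \<in> E" using r by blast
      have rc: "real (card {i\<in>{..M}. U (r j) \<le> U (r i)}) \<le> c" using r by blast
      have "card {i\<in>{..M}. U ((r \<circ> t) 0) \<le> U ((r \<circ> t) i)} = card {i\<in>{..M}. U (r j) \<le> U (r i)}"
        unfolding o_apply by (rule key)
      with rc have c2: "real (card {i\<in>{..M}. U ((r \<circ> t) 0) \<le> U ((r \<circ> t) i)}) \<le> c" by simp
      show "r \<circ> t \<in> {r\<in>E. real (card {i\<in>{..M}. U (r 0) \<le> U (r i)}) \<le> c}"
        by (rule CollectI, rule conjI, rule mapE[OF rE], rule c2)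
    qed
    show "(\<lambda>r. r \<circ> t) \<in> {r\<in>E. real (card {i\<in>{..M}. U (r 0) \<le> U (r i)}) \<le> c} \<rightarrow>
          {r\<in>E. real (card {i\<in>{..M}. U (r j) \<le> U (r i)}) \<le> c}"
    proof
      fix r assume r: "r \<in> {r\<in>E. real (card {i\<in>{..M}. U (r 0) \<le> U (r i)}) \<le> c}"
      have rE: "r \<in> E" using r by blast
      have rc: "real (card {i\<in>{..M}. U (r 0) \<le> U (r i)}) \<le> c" using r by blast
      have "card {i\<in>{..M}. U (r (t j)) \<le> U (r (t i))} = card {i\<in>{..M}. U (r 0) \<le> U (r i)}"
        unfolding tj by (rule card_perm_reindex[OF tp]) simp
      with rc have c2: "real (card {i\<in>{..M}. U ((r \<circ> t) j) \<le> U ((r \<circ> t) i)}) \<le> c" by simp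
      show "r \<circ> t \<in> {r\<in>E. real (card {i\<in>{..M}. U (r j) \<le> U (r i)}) \<le> c}"
        by (rule CollectI, rule conjI, rule mapE[OF rE], rule c2)
    qed
    show "\<And>x. x \<circ> t \<circ> t = x" using tt by (simp add: comp_assoc)
    show "\<And>x. x \<circ> t \<circ> t = x" using tt by (simp add: comp_assoc)
  qed
  from bij_betw_same_card[OF this] show ?thesis by (rule sym)
qed


lemma card_filter_sum: "finite A \<Longrightarrow> card {x\<in>A. P x} = (\<Sum>x\<in>A. if P x then 1 else 0)"
  by (simp add: sum.If_cases Int_def)

lemma perm_avg:
  fixes U :: "('l::finite \<Rightarrow> 'l) \<Rightarrow> real" and M :: nat and \<alpha> :: real
  assumes apos: "\<alpha> > 0"
  defines "P \<equiv> {\<pi>::'l\<Rightarrow>'l. \<pi> permutes UNIV}"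
  shows "real (\<Sum>\<tau>\<in>P. card {pis \<in> PiE {..<M} (\<lambda>_. P).
             real (card {i. i<M \<and> U \<tau> \<le> U (\<tau> \<circ> pis i)}) + 1 \<le> \<alpha> * (real M + 1)})
         \<le> \<alpha> * real (card P) ^ (M+1)"
proof -
  define c where "c = \<alpha> * (real M + 1)"
  have c0: "c \<ge> 0" using apos unfolding c_def by simp
  define E where "E = PiE {..M} (\<lambda>_. P)"
  define Q where "Q r j \<longleftrightarrow> real (card {i\<in>{..M}. U (r j) \<le> U (r i)}) \<le> c" for r j
  define B where "B \<tau> = {pis \<in> PiE {..<M} (\<lambda>_. P).
             real (card {i. i<M \<and> U \<tau> \<le> U (\<tau> \<circ> pis i)}) + 1 \<le> \<alpha> * (real M + 1)}" for \<tau>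
  have finP: "finite P" by (rule finite_subset[OF subset_UNIV]) simp
  have finE: "finite E" unfolding E_def using finP by (intro finite_PiE) auto
  have finB: "finite (B \<tau>)" for \<tau> unfolding B_def using finP by (intro finite_subset[OF _ finite_PiE[of "{..<M}" "\<lambda>_. P"]]) auto
  have s1: "(\<Sum>\<tau>\<in>P. card (B \<tau>)) = card (Sigma P B)"
    using finP finB by (simp add: card_SigmaI)
  define f where "f = (\<lambda>(\<tau>::'l\<Rightarrow>'l, pis::nat\<Rightarrow>'l\<Rightarrow>'l). (\<lambda>i. if i = 0 then \<tau> else if i \<le> M then \<tau> \<circ> pis (i - 1) else undefined))"
  have inj: "inj_on f (Sigma P B)"
  proof (rule inj_onI)
    fix x y assume x: "x \<in> Sigma P B" and y: "y \<in> Sigma P B" and fxy: "f x = f y"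
    obtain \<tau> pis where xe: "x = (\<tau>, pis)" by (cases x)
    obtain \<tau>' pis' where ye: "y = (\<tau>', pis')" by (cases y)
    have tt: "\<tau> = \<tau>'" using fun_cong[OF fxy, of 0] unfolding xe ye f_def by simp
    have tP: "\<tau> permutes UNIV" using x unfolding xe P_def by blast
    have pisE: "pis \<in> PiE {..<M} (\<lambda>_. P)" using x unfolding xe B_def by blast
    have pisE': "pis' \<in> PiE {..<M} (\<lambda>_. P)" using y unfolding ye B_def by blast
    have "pis i = pis' i" for i
    proof (cases "i < M")
      case True
      have "f x (Suc i) = f y (Suc i)" using fxy by simp
      then have "\<tau> \<circ> pis i = \<tau> \<circ> pis' i" using True tt unfolding xe ye f_def by simp
      then show ?thesis using permutes_inj[OF tP] by (simp add: fun_eq_iff inj_def)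
    next
      case False
      then have ni: "i \<notin> {..<M}" by simp
      show ?thesis using PiE_arb[OF pisE ni] PiE_arb[OF pisE' ni] by (rule trans[OF _ sym])
    qed
    then show "x = y" unfolding xe ye using tt by auto
  qed
  have img: "f ` Sigma P B \<subseteq> {r\<in>E. Q r 0}"
  proof
    fix r assume "r \<in> f ` Sigma P B"
    then obtain \<tau> pis where tp: "\<tau> \<in> P" and pB: "pis \<in> B \<tau>" and r: "r = f (\<tau>, pis)" by blast
    have pisE: "pis \<in> PiE {..<M} (\<lambda>_. P)" using pB unfolding B_def by blast
    have cnd: "real (card {i. i<M \<and> U \<tau> \<le> U (\<tau> \<circ> pis i)}) + 1 \<le> c"
      using pB unfolding B_def c_def by blast
    have r0: "r 0 = \<tau>" unfolding r f_def by simp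
    have rS: "r (Suc i) = \<tau> \<circ> pis i" if "i < M" for i unfolding r f_def using that by simp
    have rE: "r \<in> E" unfolding E_def
    proof (rule PiE_I)
      fix i assume i: "i \<in> {..M}"
      show "r i \<in> P"
      proof (cases i)
        case 0 then show ?thesis using r0 tp by simp
      next
        case (Suc k)
        then have k: "k < M" using i by simp
        have "pis k \<in> P" using pisE k by (auto simp: PiE_iff)
        then have "\<tau> \<circ> pis k \<in> P" using tp unfolding P_def by (auto intro: permutes_compose)
        then show ?thesis using rS[OF k] Suc by simp
      qed
    next
      fix i assume i: "i \<notin> {..M}"
      then show "r i = undefined" unfolding r f_def by simp
    qed
    have seteq: "{i\<in>{..M}. U (r 0) \<le> U (r i)} = insert 0 (Suc ` {i. i<M \<and> U \<tau> \<le> U (\<tau> \<circ> pis i)})"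
    proof (rule set_eqI)
      fix i show "i \<in> {i\<in>{..M}. U (r 0) \<le> U (r i)} \<longleftrightarrow> i \<in> insert 0 (Suc ` {i. i<M \<and> U \<tau> \<le> U (\<tau> \<circ> pis i)})"
      proof (cases i)
        case 0 then show ?thesis by simp
      next
        case (Suc k)
        show ?thesis
        proof
          assume "i \<in> {i\<in>{..M}. U (r 0) \<le> U (r i)}"
          then have "k < M" "U \<tau> \<le> U (\<tau> \<circ> pis k)" using Suc r0 rS by auto
          then show "i \<in> insert 0 (Suc ` {i. i<M \<and> U \<tau> \<le> U (\<tau> \<circ> pis i)})" using Suc by blast
        next
          assume "i \<in> insert 0 (Suc ` {i. i<M \<and> U \<tau> \<le> U (\<tau> \<circ> pis i)})"
          then have "k < M" "U \<tau> \<le> U (\<tau> \<circ> pis k)" using Suc by auto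
          then show "i \<in> {i\<in>{..M}. U (r 0) \<le> U (r i)}" using Suc r0 rS by auto
        qed
      qed
    qed
    have "card {i\<in>{..M}. U (r 0) \<le> U (r i)} = Suc (card {i. i<M \<and> U \<tau> \<le> U (\<tau> \<circ> pis i)})"
      unfolding seteq by (subst card_insert_disjoint) (auto simp: card_image)
    then have "Q r 0" unfolding Q_def using cnd by simp
    then show "r \<in> {r\<in>E. Q r 0}" using rE by blast
  qed
  have s2: "card (Sigma P B) \<le> card {r\<in>E. Q r 0}"
    using card_inj_on_le[OF inj img] finE by simp
  have s3: "card {r\<in>E. Q r j} = card {r\<in>E. Q r 0}" if "j \<le> M" for j
    using swap_count[OF that, where U=U and P=P and c=c] unfolding Q_def E_def by (rule sym)
  have "(\<Sum>j\<in>{..M}. card {r\<in>E. Q r j}) = (\<Sum>j\<in>{..M}. card {r\<in>E. Q r 0})"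
    by (rule sum.cong[OF refl s3]) simp
  then have "(\<Sum>j\<in>{..M}. card {r\<in>E. Q r j}) = (M+1) * card {r\<in>E. Q r 0}"
    by simp
  moreover have "(\<Sum>j\<in>{..M}. card {r\<in>E. Q r j}) = (\<Sum>r\<in>E. card {j\<in>{..M}. Q r j})"
  proof -
    have "(\<Sum>j\<in>{..M}. card {r\<in>E. Q r j}) = (\<Sum>j\<in>{..M}. \<Sum>r\<in>E. if Q r j then 1 else 0)"
      using finE by (simp add: card_filter_sum)
    also have "\<dots> = (\<Sum>r\<in>E. \<Sum>j\<in>{..M}. if Q r j then 1 else 0)" by (rule sum.swap)
    also have "\<dots> = (\<Sum>r\<in>E. card {j\<in>{..M}. Q r j})" by (rule sum.cong[OF refl], rule card_filter_sum[symmetric]) simp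
    finally show ?thesis .
  qed
  moreover have "real (\<Sum>r\<in>E. card {j\<in>{..M}. Q r j}) \<le> real (card E) * c"
  proof -
    have "real (\<Sum>r\<in>E. card {j\<in>{..M}. Q r j}) = (\<Sum>r\<in>E. real (card {j\<in>{..M}. Q r j}))" by simp
    also have "\<dots> \<le> (\<Sum>r\<in>E. c)"
      by (rule sum_mono) (unfold Q_def, rule rank_count[OF _ c0], simp)
    finally show ?thesis by simp
  qed
  moreover have "card E = card P ^ (M+1)" unfolding E_def by (simp add: card_PiE)
  ultimately have "real ((M+1) * card {r\<in>E. Q r 0}) \<le> real (card P ^ (M+1)) * c" by metis
  then have "real (card {r\<in>E. Q r 0}) * (real M + 1) \<le> (\<alpha> * real (card P) ^ (M+1)) * (real M + 1)"
    unfolding c_def by (simp add: algebra_simps)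
  then have "real (card {r\<in>E. Q r 0}) \<le> \<alpha> * real (card P) ^ (M+1)" by simp
  moreover have "(\<Sum>\<tau>\<in>P. card {pis \<in> PiE {..<M} (\<lambda>_. P).
             real (card {i. i<M \<and> U \<tau> \<le> U (\<tau> \<circ> pis i)}) + 1 \<le> \<alpha> * (real M + 1)}) = card (Sigma P B)"
    unfolding s1[symmetric] B_def by simp
  ultimately show ?thesis using s2 by (smt (verit) of_nat_mono)
qed


lemma perm_set_facts:
  "finite {\<pi>::'l::finite\<Rightarrow>'l. \<pi> permutes UNIV}" "{\<pi>::'l::finite\<Rightarrow>'l. \<pi> permutes UNIV} \<noteq> {}"
  by (rule finite_subset[OF subset_UNIV], simp) (use permutes_id in blast)

lemma space_perm_dist: "space (perm_dist M :: (nat \<Rightarrow> 'l::finite \<Rightarrow> 'l) measure) = PiE {..<M} (\<lambda>_. UNIV)"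
  unfolding perm_dist_def by (simp add: space_PiM)

lemma finite_space_perm_dist: "finite (space (perm_dist M :: (nat \<Rightarrow> 'l::finite \<Rightarrow> 'l) measure))"
  unfolding space_perm_dist by (rule finite_PiE) auto

lemma perm_dist_singleton:
  fixes x :: "nat \<Rightarrow> 'l::finite \<Rightarrow> 'l"
  assumes x: "x \<in> space (perm_dist M)"
  shows "{x} \<in> sets (perm_dist M)"
    and "measure (perm_dist M) {x} = (\<Prod>i<M. indicator {\<pi>::'l\<Rightarrow>'l. \<pi> permutes UNIV} (x i) / real (card {\<pi>::'l\<Rightarrow>'l. \<pi> permutes UNIV}))"
proof -
  define P where "P = {\<pi>::'l\<Rightarrow>'l. \<pi> permutes UNIV}"
  define U where "U = measure_pmf (pmf_of_set P)"
  have pd: "perm_dist M = PiM {..<M} (\<lambda>_. U)" unfolding perm_dist_def U_def P_def ..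
  have xE: "x \<in> PiE {..<M} (\<lambda>_. UNIV)" using x space_perm_dist by blast
  have xeq: "{x} = PiE {..<M} (\<lambda>i. {x i})"
  proof
    show "{x} \<subseteq> PiE {..<M} (\<lambda>i. {x i})" using xE by (auto simp: PiE_iff)
    show "PiE {..<M} (\<lambda>i. {x i}) \<subseteq> {x}"
    proof
      fix y assume y: "y \<in> PiE {..<M} (\<lambda>i. {x i})"
      have "y i = x i" for i
      proof (cases "i < M")
        case True then show ?thesis using y by (auto simp: PiE_iff)
      next
        case False
        then have ni: "i \<notin> {..<M}" by simp
        show ?thesis using PiE_arb[OF y ni] PiE_arb[OF xE ni] by (rule trans[OF _ sym])
      qed
      then show "y \<in> {x}" by auto
    qed
  qed
  show "{x} \<in> sets (perm_dist M)" unfolding xeq pd by (rule sets_PiM_I_finite) (auto simp: U_def)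
  interpret product_prob_space "\<lambda>_::nat. U" by (rule product_prob_spaceI) (simp add: U_def prob_space_measure_pmf)
  have "emeasure (perm_dist M) {x} = (\<Prod>i\<in>{..<M}. emeasure U {x i})"
    unfolding xeq pd by (rule emeasure_PiM) (auto simp: U_def)
  also have "\<dots> = (\<Prod>i\<in>{..<M}. ennreal (indicator P (x i) / real (card P)))"
    unfolding U_def using perm_set_facts[where 'l='l] unfolding P_def[symmetric]
    by (simp add: emeasure_pmf_single)
  also have "\<dots> = ennreal (\<Prod>i\<in>{..<M}. indicator P (x i) / real (card P))"
    by (rule prod_ennreal) simp
  finally show "measure (perm_dist M) {x} = (\<Prod>i<M. indicator {\<pi>::'l\<Rightarrow>'l. \<pi> permutes UNIV} (x i) / real (card {\<pi>::'l\<Rightarrow>'l. \<pi> permutes UNIV}))"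
    unfolding measure_def P_def by (simp add: prod_nonneg)
qed

lemma perm_dist_measure:
  fixes B :: "(nat \<Rightarrow> 'l::finite \<Rightarrow> 'l) set"
  assumes B: "B \<subseteq> space (perm_dist M)"
  shows "B \<in> sets (perm_dist M)"
    and "measure (perm_dist M) B = real (card (B \<inter> PiE {..<M} (\<lambda>_. {\<pi>::'l\<Rightarrow>'l. \<pi> permutes UNIV})))
                / real (card {\<pi>::'l\<Rightarrow>'l. \<pi> permutes UNIV}) ^ M"
proof -
  define P where "P = {\<pi>::'l\<Rightarrow>'l. \<pi> permutes UNIV}"
  have finB: "finite B" using finite_subset[OF B finite_space_perm_dist] .
  have sing: "\<And>x. x \<in> B \<Longrightarrow> {x} \<in> sets (perm_dist M)" using B perm_dist_singleton(1) by blast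
  have "B = (\<Union>x\<in>B. {x})" by blast
  also have "\<dots> \<in> sets (perm_dist M)" using finB sing by (intro sets.finite_UN) auto
  finally show "B \<in> sets (perm_dist M)" .
  have "measure (perm_dist M) B = (\<Sum>x\<in>B. measure (perm_dist M) {x})"
  proof (rule measure_eq_sum_singleton[OF finB sing])
    have ps: "prob_space (perm_dist M :: (nat \<Rightarrow> 'l \<Rightarrow> 'l) measure)"
      unfolding perm_dist_def by (rule prob_space_PiM) (rule prob_space_measure_pmf)
    fix x :: "nat \<Rightarrow> 'l \<Rightarrow> 'l" show "emeasure (perm_dist M) {x} \<noteq> \<infinity>"
      using prob_space.emeasure_le_1[OF ps, of "{x}"] by (auto simp: top_unique)
  qed
  also have "\<dots> = (\<Sum>x\<in>B. if x \<in> PiE {..<M} (\<lambda>_. P) then 1 / real (card P) ^ M else 0)"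
  proof (rule sum.cong[OF refl])
    fix x assume xB: "x \<in> B"
    then have xs: "x \<in> space (perm_dist M)" using B by blast
    have xE: "x \<in> PiE {..<M} (\<lambda>_. UNIV)" using xs space_perm_dist by blast
    have "measure (perm_dist M) {x} = (\<Prod>i<M. indicator P (x i) / real (card P))"
      using perm_dist_singleton(2)[OF xs] unfolding P_def .
    also have "\<dots> = (\<Prod>i<M. indicator P (x i)) / real (card P) ^ M"
      by (simp add: prod_dividef)
    also have "(\<Prod>i<M. indicator P (x i) :: real) = (if x \<in> PiE {..<M} (\<lambda>_. P) then 1 else 0)"
    proof (cases "x \<in> PiE {..<M} (\<lambda>_. P)")
      case True
      then have "\<And>i. i \<in> {..<M} \<Longrightarrow> indicator P (x i) = (1::real)" by (auto simp: PiE_iff)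
      then show ?thesis using True by simp
    next
      case False
      then obtain i where i: "i < M" "x i \<notin> P" using xE by (auto simp: PiE_iff)
      then have "(\<Prod>i<M. indicator P (x i) :: real) = 0"
        by (intro prod_zero) (use i in \<open>auto intro!: bexI[of _ i]\<close>)
      then show ?thesis using False by simp
    qed
    finally show "measure (perm_dist M) {x} = (if x \<in> PiE {..<M} (\<lambda>_. P) then 1 / real (card P) ^ M else 0)"
      by simp
  qed
  also have "\<dots> = real (card (B \<inter> PiE {..<M} (\<lambda>_. P))) / real (card P) ^ M"
    using finB by (simp add: sum.If_cases Int_def)
  finally show "measure (perm_dist M) B = real (card (B \<inter> PiE {..<M} (\<lambda>_. {\<pi>::'l\<Rightarrow>'l. \<pi> permutes UNIV})))
                / real (card {\<pi>::'l\<Rightarrow>'l. \<pi> permutes UNIV}) ^ M" unfolding P_def .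
qed


lemma gauss_prob: "\<sigma> > 0 \<Longrightarrow> prob_space (gauss_noise \<sigma> :: ('l::finite \<Rightarrow> real) measure)"
  unfolding gauss_noise_def by (rule prob_space_PiM) (rule prob_space_normal_density)

lemma space_gauss: "space (gauss_noise \<sigma>) = UNIV"
  unfolding gauss_noise_def by (simp add: space_PiM)

lemma sets_gauss: "sets (gauss_noise \<sigma> :: ('l::finite \<Rightarrow> real) measure) = sets (PiM UNIV (\<lambda>_::'l. lborel))"
  unfolding gauss_noise_def by (rule sets_PiM_cong) simp_all

lemma gauss_perm_inv:
  fixes h :: "('l::finite \<Rightarrow> real) \<Rightarrow> real"
  assumes sp: "\<sigma> > 0" and tp: "\<tau> permutes (UNIV :: 'l set)" and hm: "h \<in> borel_measurable (gauss_noise \<sigma>)"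
  shows "integral\<^sup>L (gauss_noise \<sigma>) (\<lambda>n. h (n \<circ> \<tau>)) = integral\<^sup>L (gauss_noise \<sigma>) h"
proof -
  define N0 where "N0 = density lborel (normal_density 0 \<sigma>)"
  have g: "gauss_noise \<sigma> = PiM (UNIV::'l set) (\<lambda>_. N0)" unfolding gauss_noise_def N0_def ..
  have d: "distr (PiM UNIV (\<lambda>_. N0)) (PiM UNIV (\<lambda>i. (\<lambda>_::'l. N0) (\<tau> i))) (\<lambda>\<omega>. \<lambda>n\<in>UNIV. \<omega> (\<tau> n)) = PiM UNIV (\<lambda>i. (\<lambda>_::'l. N0) (\<tau> i))"
    by (rule distr_PiM_reindex) (auto simp: N0_def prob_space_normal_density sp permutes_inj[OF tp])
  then have d2: "distr (gauss_noise \<sigma>) (gauss_noise \<sigma>) (\<lambda>\<omega>. \<omega> \<circ> \<tau>) = gauss_noise \<sigma>"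
    unfolding g by (simp add: comp_def restrict_UNIV)
  have mm: "(\<lambda>\<omega>. \<omega> \<circ> \<tau>) \<in> measurable (gauss_noise \<sigma>) (gauss_noise \<sigma> :: ('l \<Rightarrow> real) measure)"
    unfolding g comp_def by (auto intro!: measurable_PiM_single' measurable_component_singleton simp: space_PiM N0_def)
  have "integral\<^sup>L (gauss_noise \<sigma>) h = integral\<^sup>L (distr (gauss_noise \<sigma>) (gauss_noise \<sigma>) (\<lambda>\<omega>. \<omega> \<circ> \<tau>)) h"
    using d2 by simp
  also have "\<dots> = integral\<^sup>L (gauss_noise \<sigma>) (\<lambda>n. h (n \<circ> \<tau>))"
    by (rule integral_distr[OF mm hm])
  finally show ?thesis by simp
qed

lemma perm_comp_measurable: "(\<lambda>\<omega>. \<omega> \<circ> \<tau>) \<in> measurable (gauss_noise \<sigma>) (gauss_noise \<sigma> :: ('l::finite \<Rightarrow> real) measure)"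
  unfolding gauss_noise_def comp_def by (auto intro!: measurable_PiM_single' measurable_component_singleton simp: space_PiM)

lemma shift_measurable: "(\<lambda>\<omega> i. \<omega> i + d i) \<in> measurable (gauss_noise \<sigma>) (gauss_noise \<sigma> :: ('l::finite \<Rightarrow> real) measure)"
  unfolding gauss_noise_def by (rule measurable_PiM_single') (auto simp: space_PiM)


lemma nd_mgf:
  assumes "\<sigma> > 0"
  shows "normal_density 0 \<sigma> x * exp (a*x + b) = exp (a^2*\<sigma>^2/2 + b) * normal_density (a*\<sigma>^2) \<sigma> x"
proof -
  have e: "- ((x - 0)^2) / (2*\<sigma>^2) + (a*x+b) = (a^2*\<sigma>^2/2 + b) + (- ((x - a*\<sigma>^2)^2) / (2*\<sigma>^2))"
    using assms by (simp add: field_simps power2_eq_square)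
  have "normal_density 0 \<sigma> x * exp (a*x + b) = 1 / sqrt (2 * pi * \<sigma>\<^sup>2) * exp (- ((x - 0)^2) / (2*\<sigma>^2) + (a*x+b))"
    unfolding normal_density_def exp_add[of "- ((x - 0)^2) / (2*\<sigma>^2)" "a*x+b"] by (simp add: mult.assoc)
  also have "\<dots> = 1 / sqrt (2 * pi * \<sigma>\<^sup>2) * exp ((a^2*\<sigma>^2/2 + b) + (- ((x - a*\<sigma>^2)^2) / (2*\<sigma>^2)))"
    unfolding e ..
  also have "\<dots> = exp (a^2*\<sigma>^2/2 + b) * normal_density (a*\<sigma>^2) \<sigma> x"
    unfolding normal_density_def exp_add[of "a^2*\<sigma>^2/2 + b" "- ((x - a*\<sigma>^2)^2) / (2*\<sigma>^2)"] by (simp add: mult_ac)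
  finally show ?thesis .
qed

lemma nd_tilt:
  assumes "\<sigma> > 0"
  shows "normal_density 0 \<sigma> x * exp (d/\<sigma>^2*x + (- (d^2)/(2*\<sigma>^2))) = normal_density d \<sigma> x"
proof -
  have e1: "(d/\<sigma>^2)^2*\<sigma>^2/2 + (- (d^2)/(2*\<sigma>^2)) = 0" using assms by (simp add: field_simps power2_eq_square)
  have e2: "d/\<sigma>^2*\<sigma>^2 = d" using assms by simp
  show ?thesis using nd_mgf[OF assms, where a="d/\<sigma>^2" and b="- (d^2)/(2*\<sigma>^2)" and x=x] unfolding e1 e2 by simp
qed

lemma nd_shift: "normal_density d \<sigma> (x + d) = normal_density 0 \<sigma> x"
  unfolding normal_density_def by simp

lemma N0_mgf:
  assumes sp: "\<sigma> > 0"
  shows "integrable (density lborel (normal_density 0 \<sigma>)) (\<lambda>x. exp (a*x + b))"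
    and "integral\<^sup>L (density lborel (normal_density 0 \<sigma>)) (\<lambda>x. exp (a*x + b)) = exp (a^2*\<sigma>^2/2 + b)"
proof -
  have eq: "(\<lambda>x. normal_density 0 \<sigma> x * exp (a*x + b)) = (\<lambda>x. exp (a^2*\<sigma>^2/2 + b) * normal_density (a*\<sigma>^2) \<sigma> x)"
    using nd_mgf[OF sp] by simp
  show "integrable (density lborel (normal_density 0 \<sigma>)) (\<lambda>x. exp (a*x + b))"
    by (subst integrable_density) (auto simp: eq integrable_normal_density[OF sp])
  show "integral\<^sup>L (density lborel (normal_density 0 \<sigma>)) (\<lambda>x. exp (a*x + b)) = exp (a^2*\<sigma>^2/2 + b)"
    by (subst integral_density) (auto simp: eq integral_normal_density[OF sp])
qed

lemma N0_preimage_shift: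
  assumes sp: "\<sigma> > 0" and A: "A \<in> sets borel"
  shows "emeasure (density lborel (normal_density 0 \<sigma>)) {x. x + d \<in> A} = emeasure (density lborel (normal_density d \<sigma>)) A"
proof -
  have Am: "{x. x + d \<in> A} \<in> sets borel" using A by measurable
  have "emeasure (density lborel (normal_density d \<sigma>)) A = (\<integral>\<^sup>+ y. ennreal (normal_density d \<sigma> y) * indicator A y \<partial>lborel)"
    using A by (subst emeasure_density) auto
  also have "\<dots> = (\<integral>\<^sup>+ y. ennreal (normal_density d \<sigma> y) * indicator A y \<partial>distr lborel borel ((+) d))"
    by (simp add: lborel_distr_plus)
  also have "\<dots> = (\<integral>\<^sup>+ x. ennreal (normal_density d \<sigma> (d + x)) * indicator A (d + x) \<partial>lborel)"
    using A by (subst nn_integral_distr) auto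
  also have "\<dots> = (\<integral>\<^sup>+ x. ennreal (normal_density 0 \<sigma> x) * indicator {x. x + d \<in> A} x \<partial>lborel)"
    using nd_shift[of d \<sigma>] by (intro nn_integral_cong) (simp add: add.commute indicator_def)
  also have "\<dots> = emeasure (density lborel (normal_density 0 \<sigma>)) {x. x + d \<in> A}"
    using Am by (subst emeasure_density) auto
  finally show ?thesis ..
qed

lemma N0_tilt_set:
  assumes sp: "\<sigma> > 0" and A: "A \<in> sets borel"
  shows "(\<integral>\<^sup>+ x. ennreal (exp (d/\<sigma>^2*x + (- (d^2)/(2*\<sigma>^2)))) * indicator A x \<partial>density lborel (normal_density 0 \<sigma>))
         = emeasure (density lborel (normal_density d \<sigma>)) A"
proof -
  have "(\<integral>\<^sup>+ x. ennreal (exp (d/\<sigma>^2*x + (- (d^2)/(2*\<sigma>^2)))) * indicator A x \<partial>density lborel (normal_density 0 \<sigma>))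
      = (\<integral>\<^sup>+ x. ennreal (normal_density 0 \<sigma> x) * (ennreal (exp (d/\<sigma>^2*x + (- (d^2)/(2*\<sigma>^2)))) * indicator A x) \<partial>lborel)"
    using A by (subst nn_integral_density) auto
  also have "\<dots> = (\<integral>\<^sup>+ x. ennreal (normal_density d \<sigma> x) * indicator A x \<partial>lborel)"
  proof (intro nn_integral_cong)
    fix x
    have "normal_density 0 \<sigma> x * exp (d/\<sigma>^2*x + (- (d^2)/(2*\<sigma>^2))) = normal_density d \<sigma> x"
      by (rule nd_tilt[OF sp])
    then have "ennreal (normal_density 0 \<sigma> x * exp (d/\<sigma>^2*x + (- (d^2)/(2*\<sigma>^2)))) = ennreal (normal_density d \<sigma> x)"
      by (rule arg_cong)
    then have e: "ennreal (normal_density 0 \<sigma> x) * ennreal (exp (d/\<sigma>^2*x + (- (d^2)/(2*\<sigma>^2)))) = ennreal (normal_density d \<sigma> x)"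
      unfolding ennreal_mult'[OF normal_density_nonneg] .
    show "ennreal (normal_density 0 \<sigma> x) * (ennreal (exp (d/\<sigma>^2*x + (- (d^2)/(2*\<sigma>^2)))) * indicator A x) = ennreal (normal_density d \<sigma> x) * indicator A x"
      by (simp only: mult.assoc[symmetric] e)
  qed
  also have "\<dots> = emeasure (density lborel (normal_density d \<sigma>)) A"
    using A by (subst emeasure_density) auto
  finally show ?thesis .
qed


lemma gauss_shift_distr:
  fixes \<delta> :: "'l::finite \<Rightarrow> real"
  assumes sp: "\<sigma> > 0"
  defines "\<nu> \<equiv> PiM (UNIV::'l set) (\<lambda>i. density lborel (normal_density (\<delta> i) \<sigma>))"
  shows "(\<lambda>n i. n i + \<delta> i) \<in> measurable (gauss_noise \<sigma>) \<nu>"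
    and "distr (gauss_noise \<sigma>) \<nu> (\<lambda>n i. n i + \<delta> i) = \<nu>"
proof -
  define N0 where "N0 = density lborel (normal_density 0 \<sigma>)"
  define Nd where "Nd = (\<lambda>i. density lborel (normal_density (\<delta> i) \<sigma>))"
  have g: "gauss_noise \<sigma> = PiM (UNIV::'l set) (\<lambda>_. N0)" unfolding gauss_noise_def N0_def ..
  have nu: "\<nu> = PiM UNIV Nd" unfolding \<nu>_def Nd_def ..
  interpret P0: product_prob_space "\<lambda>_::'l. N0" by (rule product_prob_spaceI) (simp add: N0_def prob_space_normal_density sp)
  interpret Pd: product_prob_space Nd by (rule product_prob_spaceI) (simp add: Nd_def prob_space_normal_density sp)
  show mshift: "(\<lambda>n i. n i + \<delta> i) \<in> measurable (gauss_noise \<sigma>) \<nu>"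
    unfolding g nu by (rule measurable_PiM_single') (auto simp: N0_def Nd_def space_PiM)
  show "distr (gauss_noise \<sigma>) \<nu> (\<lambda>n i. n i + \<delta> i) = \<nu>"
    unfolding nu
  proof (rule Pd.PiM_eqI)
    show "finite (UNIV :: 'l set)" by simp
    show "sets (distr (gauss_noise \<sigma>) (PiM UNIV Nd) (\<lambda>n i. n i + \<delta> i)) = sets (PiM UNIV Nd)" by simp
    fix A assume A: "\<And>i. i \<in> UNIV \<Longrightarrow> A i \<in> sets (Nd i)"
    have Ab: "A i \<in> sets borel" for i using A[of i] by (simp add: Nd_def)
    have pre: "(\<lambda>n i. n i + \<delta> i) -` PiE UNIV A \<inter> space (gauss_noise \<sigma>) = PiE UNIV (\<lambda>i. {x. x + \<delta> i \<in> A i})"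
      by (auto simp: PiE_iff space_gauss)
    have "emeasure (distr (gauss_noise \<sigma>) (PiM UNIV Nd) (\<lambda>n i. n i + \<delta> i)) (PiE UNIV A)
        = emeasure (gauss_noise \<sigma>) ((\<lambda>n i. n i + \<delta> i) -` PiE UNIV A \<inter> space (gauss_noise \<sigma>))"
      using mshift A unfolding nu by (intro emeasure_distr) (auto intro!: sets_PiM_I_finite)
    also have "\<dots> = emeasure (PiM UNIV (\<lambda>_. N0)) (PiE UNIV (\<lambda>i. {x. x + \<delta> i \<in> A i}))"
      by (simp only: pre) (simp only: g)
    also have "\<dots> = (\<Prod>i\<in>UNIV. emeasure N0 {x. x + \<delta> i \<in> A i})"
      using Ab by (intro P0.emeasure_PiM) (auto simp: N0_def)
    also have "\<dots> = (\<Prod>i\<in>UNIV. emeasure (Nd i) (A i))"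
      using Ab by (intro prod.cong refl) (simp add: N0_def Nd_def N0_preimage_shift[OF sp])
    finally show "emeasure (distr (gauss_noise \<sigma>) (PiM UNIV Nd) (\<lambda>n i. n i + \<delta> i)) (PiE UNIV A) = (\<Prod>i\<in>UNIV. emeasure (Nd i) (A i))" .
  qed
qed

lemma gauss_tilt_density:
  fixes \<delta> :: "'l::finite \<Rightarrow> real"
  assumes sp: "\<sigma> > 0"
  defines "\<nu> \<equiv> PiM (UNIV::'l set) (\<lambda>i. density lborel (normal_density (\<delta> i) \<sigma>))"
  defines "L \<equiv> (\<lambda>n::'l \<Rightarrow> real. \<Prod>i\<in>UNIV. exp (\<delta> i/\<sigma>^2 * n i + (- (\<delta> i^2)/(2*\<sigma>^2))))"
  shows "density (gauss_noise \<sigma>) (\<lambda>n. ennreal (L n)) = \<nu>"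
proof -
  define N0 where "N0 = density lborel (normal_density 0 \<sigma>)"
  define Nd where "Nd = (\<lambda>i. density lborel (normal_density (\<delta> i) \<sigma>))"
  define l where "l = (\<lambda>i x. exp (\<delta> i/\<sigma>^2 * x + (- (\<delta> i^2)/(2*\<sigma>^2))))"
  have g: "gauss_noise \<sigma> = PiM (UNIV::'l set) (\<lambda>_. N0)" unfolding gauss_noise_def N0_def ..
  have nu: "\<nu> = PiM UNIV Nd" unfolding \<nu>_def Nd_def ..
  interpret P0: product_prob_space "\<lambda>_::'l. N0" by (rule product_prob_spaceI) (simp add: N0_def prob_space_normal_density sp)
  interpret Pd: product_prob_space Nd by (rule product_prob_spaceI) (simp add: Nd_def prob_space_normal_density sp)
  have Lm: "L \<in> borel_measurable (gauss_noise \<sigma>)"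
    unfolding L_def g N0_def by measurable
  show ?thesis
    unfolding nu
  proof (rule Pd.PiM_eqI)
    show "finite (UNIV :: 'l set)" by simp
    show "sets (density (gauss_noise \<sigma>) (\<lambda>n. ennreal (L n))) = sets (PiM UNIV Nd)"
      unfolding g by (simp add: Nd_def N0_def cong: sets_PiM_cong)
    fix A assume A: "\<And>i. i \<in> UNIV \<Longrightarrow> A i \<in> sets (Nd i)"
    have Ab: "A i \<in> sets borel" for i using A[of i] by (simp add: Nd_def)
    have PA: "PiE UNIV A \<in> sets (gauss_noise \<sigma>)"
      unfolding g using Ab by (intro sets_PiM_I_finite) (auto simp: N0_def)
    have pw: "ennreal (L n) * indicator (PiE UNIV A) n = (\<Prod>i\<in>UNIV. ennreal (l i (n i)) * indicator (A i) (n i))" for n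
    proof -
      have "ennreal (L n) = (\<Prod>i\<in>UNIV. ennreal (l i (n i)))"
        unfolding L_def l_def by (rule prod_ennreal[symmetric]) simp
      moreover have "(indicator (PiE UNIV A) n :: ennreal) = (\<Prod>i\<in>UNIV. indicator (A i) (n i))"
      proof (cases "n \<in> PiE UNIV A")
        case True then show ?thesis by (simp add: PiE_iff)
      next
        case False
        then obtain i where i: "n i \<notin> A i" by (auto simp: PiE_iff)
        then have "(\<Prod>i\<in>UNIV. indicator (A i) (n i) :: ennreal) = 0" by (intro prod_zero) (use i in \<open>auto intro!: exI[of _ i]\<close>)
        then show ?thesis using False by simp
      qed
      ultimately show ?thesis by (simp add: prod.distrib)
    qed
    have "emeasure (density (gauss_noise \<sigma>) (\<lambda>n. ennreal (L n))) (PiE UNIV A)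
        = (\<integral>\<^sup>+ n. ennreal (L n) * indicator (PiE UNIV A) n \<partial>gauss_noise \<sigma>)"
      using Lm PA by (intro emeasure_density) auto
    also have "\<dots> = (\<integral>\<^sup>+ n. (\<Prod>i\<in>UNIV. ennreal (l i (n i)) * indicator (A i) (n i)) \<partial>PiM UNIV (\<lambda>_. N0))"
      unfolding pw g ..
    also have "\<dots> = (\<Prod>i\<in>UNIV. \<integral>\<^sup>+ x. ennreal (l i x) * indicator (A i) x \<partial>N0)"
      using Ab by (intro P0.product_nn_integral_prod) (auto simp: N0_def l_def)
    also have "\<dots> = (\<Prod>i\<in>UNIV. emeasure (Nd i) (A i))"
      using Ab by (intro prod.cong refl) (unfold N0_def Nd_def l_def, rule N0_tilt_set[OF sp Ab])
    finally show "emeasure (density (gauss_noise \<sigma>) (\<lambda>n. ennreal (L n))) (PiE UNIV A) = (\<Prod>i\<in>UNIV. emeasure (Nd i) (A i))" .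
  qed
qed

lemma gauss_prod_exp:
  fixes a b :: "'l::finite \<Rightarrow> real"
  assumes sp: "\<sigma> > 0"
  shows "integrable (gauss_noise \<sigma>) (\<lambda>n. \<Prod>i\<in>UNIV. exp (a i * n i + b i))"
    and "integral\<^sup>L (gauss_noise \<sigma>) (\<lambda>n. \<Prod>i\<in>UNIV. exp (a i * n i + b i)) = (\<Prod>i\<in>UNIV. exp ((a i)^2*\<sigma>^2/2 + b i))"
proof -
  define N0 where "N0 = density lborel (normal_density 0 \<sigma>)"
  have g: "gauss_noise \<sigma> = PiM (UNIV::'l set) (\<lambda>_. N0)" unfolding gauss_noise_def N0_def ..
  interpret P0: product_prob_space "\<lambda>_::'l. N0" by (rule product_prob_spaceI) (simp add: N0_def prob_space_normal_density sp)
  show "integrable (gauss_noise \<sigma>) (\<lambda>n. \<Prod>i\<in>UNIV. exp (a i * n i + b i))"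
    unfolding g by (rule P0.product_integrable_prod) (auto simp: N0_def N0_mgf[OF sp])
  have "integral\<^sup>L (gauss_noise \<sigma>) (\<lambda>n. \<Prod>i\<in>UNIV. exp (a i * n i + b i)) = (\<Prod>i\<in>UNIV. integral\<^sup>L N0 (\<lambda>x. exp (a i * x + b i)))"
    unfolding g by (rule P0.product_integral_prod) (auto simp: N0_def N0_mgf[OF sp])
  also have "\<dots> = (\<Prod>i\<in>UNIV. exp ((a i)^2*\<sigma>^2/2 + b i))"
    by (simp add: N0_def N0_mgf[OF sp])
  finally show "integral\<^sup>L (gauss_noise \<sigma>) (\<lambda>n. \<Prod>i\<in>UNIV. exp (a i * n i + b i)) = (\<Prod>i\<in>UNIV. exp ((a i)^2*\<sigma>^2/2 + b i))" .
qed


lemma amgm_pt: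
  fixes h r t :: real
  assumes h0: "0 \<le> h" and h1: "h \<le> 1" and r0: "0 \<le> r" and t0: "0 < t"
  shows "h * (r^2 - 1) \<le> 1/2 * (r^2 - 1) + t/4 * (r^2 - 2*r + 1) + 1/(4*t) * (r^2 + 2*r + 1)"
proof -
  have a: "(h - 1/2) * (r^2 - 1) \<le> 1/2 * \<bar>r^2 - 1\<bar>"
  proof -
    have "(h - 1/2) * (r^2 - 1) \<le> \<bar>h - 1/2\<bar> * \<bar>r^2 - 1\<bar>" by (metis abs_ge_self abs_mult)
    also have "\<dots> \<le> 1/2 * \<bar>r^2 - 1\<bar>"
    proof (rule mult_right_mono)
      show "\<bar>h - 1/2\<bar> \<le> 1/2" using h0 h1 by linarith
    qed simp
    finally show ?thesis .
  qed
  have b: "\<bar>r^2 - 1\<bar> = \<bar>r - 1\<bar> * (r + 1)"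
  proof -
    have "r^2 - 1 = (r - 1) * (r + 1)" by (simp add: power2_eq_square algebra_simps)
    then have "\<bar>r^2 - 1\<bar> = \<bar>r - 1\<bar> * \<bar>r + 1\<bar>" by (simp add: abs_mult)
    then show ?thesis using r0 by simp
  qed
  have c: "2 * (\<bar>r - 1\<bar> * (r + 1)) \<le> t * (r - 1)^2 + (r + 1)^2 / t"
  proof -
    have "0 \<le> (t * \<bar>r - 1\<bar> - (r + 1))^2 / t" using t0 by simp
    also have "(t * \<bar>r - 1\<bar> - (r + 1))^2 / t = t * (r - 1)^2 + (r + 1)^2 / t - 2 * (\<bar>r - 1\<bar> * (r + 1))"
      using t0 by (simp add: power2_eq_square field_simps)
    finally show ?thesis by simp
  qed
  have d: "(r - 1)^2 = r^2 - 2*r + 1" "(r + 1)^2 = r^2 + 2*r + 1" by (simp_all add: power2_eq_square algebra_simps)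
  have "h * (r^2 - 1) = (h - 1/2) * (r^2 - 1) + 1/2 * (r^2 - 1)" by (simp add: algebra_simps)
  also have "\<dots> \<le> 1/2 * (\<bar>r - 1\<bar> * (r + 1)) + 1/2 * (r^2 - 1)" using a b by simp
  also have "\<dots> \<le> 1/4 * (t * (r - 1)^2 + (r + 1)^2 / t) + 1/2 * (r^2 - 1)" using c by (simp add: mult.commute)
  also have "\<dots> = 1/2 * (r^2 - 1) + t/4 * (r^2 - 2*r + 1) + 1/(4*t) * (r^2 + 2*r + 1)"
    unfolding d using t0 by (simp add: field_simps)
  finally show ?thesis .
qed


lemma gauss_shift_bound:
  fixes h :: "('l::finite \<Rightarrow> real) \<Rightarrow> real" and \<delta> :: "'l \<Rightarrow> real"
  assumes sp: "\<sigma> > 0" and hm: "h \<in> borel_measurable (gauss_noise \<sigma>)"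
    and h0: "\<And>n. 0 \<le> h n" and h1: "\<And>n. h n \<le> 1"
  shows "integral\<^sup>L (gauss_noise \<sigma>) (\<lambda>n. h (\<lambda>i. n i + \<delta> i)) \<le> integral\<^sup>L (gauss_noise \<sigma>) h + vnorm \<delta> / (2*\<sigma>)"
proof -
  define \<mu> where "\<mu> = (gauss_noise \<sigma> :: ('l \<Rightarrow> real) measure)"
  interpret prob_space \<mu> unfolding \<mu>_def by (rule gauss_prob[OF sp])
  define c where "c = vnorm \<delta> / (2*\<sigma>)"
  define S where "S = (\<Sum>i\<in>UNIV. (\<delta> i)^2)"
  have S0: "S \<ge> 0" unfolding S_def by (simp add: sum_nonneg)
  have vS: "vnorm \<delta> = sqrt S" unfolding vnorm_def S_def ..
  have c0: "c \<ge> 0" unfolding c_def vS using sp S0 by simp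
  have c2: "c^2 = S / (4*\<sigma>^2)" unfolding c_def vS using S0 sp by (simp add: power_divide power_mult_distrib)
  have hmu: "h \<in> borel_measurable \<mu>" using hm unfolding \<mu>_def .
  have hint: "integrable \<mu> h"
    using hmu h0 h1 by (intro integrable_const_bound[where B=1]) auto
  show ?thesis
  proof (cases "c = 0")
    case True
    then have "S = 0" using c2 sp by simp
    then have "\<forall>i\<in>UNIV. (\<delta> i)^2 = 0" unfolding S_def by (subst sum_nonneg_eq_0_iff[symmetric]) auto
    then have "(\<lambda>n i. n i + \<delta> i) = (\<lambda>n. n)" by (auto simp: fun_eq_iff)
    then have "integral\<^sup>L (gauss_noise \<sigma>) (\<lambda>n. h (\<lambda>i. n i + \<delta> i)) = integral\<^sup>L (gauss_noise \<sigma>) h"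
      by (metis (no_types, lifting))
    then show ?thesis using c0 unfolding c_def by simp
  next
    case False
    then have cpos: "c > 0" using c0 by simp
    define L where "L = (\<lambda>n::'l \<Rightarrow> real. \<Prod>i\<in>UNIV. exp (\<delta> i/\<sigma>^2 * n i + (- (\<delta> i^2)/(2*\<sigma>^2))))"
    define R where "R = (\<lambda>n::'l \<Rightarrow> real. \<Prod>i\<in>UNIV. exp (\<delta> i/(2*\<sigma>^2) * n i + (- (\<delta> i^2)/(4*\<sigma>^2))))"
    define B where "B = exp (- S / (8*\<sigma>^2))"
    define \<nu> where "\<nu> = PiM (UNIV::'l set) (\<lambda>i. density lborel (normal_density (\<delta> i) \<sigma>))"
    have intL: "integrable \<mu> L" unfolding L_def \<mu>_def by (rule gauss_prod_exp(1)[OF sp])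
    have intR: "integrable \<mu> R" unfolding R_def \<mu>_def by (rule gauss_prod_exp(1)[OF sp])
    have EL: "integral\<^sup>L \<mu> L = 1"
    proof -
      have "integral\<^sup>L \<mu> L = (\<Prod>i\<in>UNIV. exp ((\<delta> i/\<sigma>^2)^2*\<sigma>^2/2 + (- (\<delta> i^2)/(2*\<sigma>^2))))"
        unfolding L_def \<mu>_def by (rule gauss_prod_exp(2)[OF sp])
      also have "\<dots> = 1"
      proof -
        have e: "(\<delta> i/\<sigma>^2)^2*\<sigma>^2/2 + (- (\<delta> i^2)/(2*\<sigma>^2)) = 0" for i
          using sp by (simp add: power2_eq_square field_simps)
        show ?thesis by (simp only: e exp_zero prod.neutral_const)
      qed
      finally show ?thesis .
    qed
    have ER: "integral\<^sup>L \<mu> R = B"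
    proof -
      have "integral\<^sup>L \<mu> R = (\<Prod>i\<in>UNIV. exp ((\<delta> i/(2*\<sigma>^2))^2*\<sigma>^2/2 + (- (\<delta> i^2)/(4*\<sigma>^2))))"
        unfolding R_def \<mu>_def by (rule gauss_prod_exp(2)[OF sp])
      also have "\<dots> = (\<Prod>i\<in>UNIV. exp (- ((\<delta> i)^2) / (8*\<sigma>^2)))"
      proof -
        have e: "(\<delta> i/(2*\<sigma>^2))^2*\<sigma>^2/2 + (- (\<delta> i^2)/(4*\<sigma>^2)) = - ((\<delta> i)^2) / (8*\<sigma>^2)" for i
          using sp by (simp add: power2_eq_square field_simps)
        show ?thesis by (simp only: e)
      qed
      also have "\<dots> = exp (\<Sum>i\<in>UNIV. - ((\<delta> i)^2) / (8*\<sigma>^2))" by (simp add: exp_sum)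
      also have "(\<Sum>i\<in>UNIV. - ((\<delta> i)^2) / (8*\<sigma>^2)) = - S / (8*\<sigma>^2)"
        unfolding S_def by (simp add: sum_divide_distrib sum_negf)
      finally show ?thesis unfolding B_def .
    qed
    have RL: "(R n)^2 = L n" for n
    proof -
      have "(R n)^2 = (\<Prod>i\<in>UNIV. (exp (\<delta> i/(2*\<sigma>^2) * n i + (- (\<delta> i^2)/(4*\<sigma>^2))))^2)"
        unfolding R_def by (simp add: prod_power_distrib)
      also have "\<dots> = L n" unfolding L_def
      proof (intro prod.cong refl)
        fix i
        have "(exp (\<delta> i/(2*\<sigma>^2) * n i + (- (\<delta> i^2)/(4*\<sigma>^2))))^2 = exp (2 * (\<delta> i/(2*\<sigma>^2) * n i + (- (\<delta> i^2)/(4*\<sigma>^2))))"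
          by (simp add: power2_eq_square exp_add[symmetric])
        also have "2 * (\<delta> i/(2*\<sigma>^2) * n i + (- (\<delta> i^2)/(4*\<sigma>^2))) = \<delta> i/\<sigma>^2 * n i + (- (\<delta> i^2)/(2*\<sigma>^2))"
          using sp by (simp add: field_simps)
        finally show "(exp (\<delta> i/(2*\<sigma>^2) * n i + (- (\<delta> i^2)/(4*\<sigma>^2))))^2 = exp (\<delta> i/\<sigma>^2 * n i + (- (\<delta> i^2)/(2*\<sigma>^2)))" .
      qed
      finally show ?thesis .
    qed
    have R0: "R n \<ge> 0" for n unfolding R_def by (simp add: prod_nonneg)
    have Lm: "L \<in> borel_measurable \<mu>" using intL by (rule borel_measurable_integrable)
    have dist: "distr \<mu> \<nu> (\<lambda>n i. n i + \<delta> i) = \<nu>" and msh: "(\<lambda>n i. n i + \<delta> i) \<in> measurable \<mu> \<nu>"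
      unfolding \<mu>_def \<nu>_def using gauss_shift_distr[OF sp] by auto
    have dens: "density \<mu> (\<lambda>n. ennreal (L n)) = \<nu>"
      unfolding \<mu>_def \<nu>_def L_def by (rule gauss_tilt_density[OF sp])
    have hnu: "h \<in> borel_measurable \<nu>" unfolding dens[symmetric] using hmu by simp
    have "integral\<^sup>L \<mu> (\<lambda>n. h (\<lambda>i. n i + \<delta> i)) = integral\<^sup>L (distr \<mu> \<nu> (\<lambda>n i. n i + \<delta> i)) h"
      by (rule integral_distr[OF msh hnu, symmetric])
    also have "\<dots> = integral\<^sup>L (density \<mu> (\<lambda>n. ennreal (L n))) h" unfolding dist dens ..
    also have "\<dots> = integral\<^sup>L \<mu> (\<lambda>n. L n * h n)"
      using hmu Lm by (subst integral_density) (auto simp: L_def prod_nonneg)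
    finally have com: "integral\<^sup>L \<mu> (\<lambda>n. h (\<lambda>i. n i + \<delta> i)) = integral\<^sup>L \<mu> (\<lambda>n. L n * h n)" .
    have intLh: "integrable \<mu> (\<lambda>n. L n * h n)"
      using intL
    proof (rule Bochner_Integration.integrable_bound)
      show "(\<lambda>n. L n * h n) \<in> borel_measurable \<mu>" using Lm hmu by measurable
      show "AE n in \<mu>. norm (L n * h n) \<le> norm (L n)"
        using h0 h1 by (auto simp: abs_mult intro!: mult_left_le)
    qed
    define t where "t = (1 + B) / c"
    have B0: "B > 0" unfolding B_def by simp
    have tpos: "t > 0" unfolding t_def using B0 cpos by simp
    define q where "q = (\<lambda>n. 1/2 * (L n - 1) + t/4 * (L n - 2 * R n + 1) + 1/(4*t) * (L n + 2 * R n + 1))"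
    have intq: "integrable \<mu> q" unfolding q_def using intL intR by simp
    have pt: "h n * (L n - 1) \<le> q n" for n
      using amgm_pt[OF h0[of n] h1[of n] R0[of n] tpos] unfolding q_def RL .
    have "integral\<^sup>L \<mu> (\<lambda>n. L n * h n) - integral\<^sup>L \<mu> h = integral\<^sup>L \<mu> (\<lambda>n. h n * (L n - 1))"
      using intLh hint by (subst Bochner_Integration.integral_diff[symmetric]) (auto simp: algebra_simps)
    also have "\<dots> \<le> integral\<^sup>L \<mu> q"
      using intLh hint intq pt by (intro integral_mono) (auto simp: algebra_simps)
    also have "integral\<^sup>L \<mu> q = 1/2 * (1 - 1) + t/4 * (1 - 2 * B + 1) + 1/(4*t) * (1 + 2 * B + 1)"
      unfolding q_def using intL intR EL ER by (simp add: prob_space)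
    also have "\<dots> = t * (1 - B) / 2 + (1 + B) / (2 * t)"
      using tpos by (simp add: field_simps)
    also have "\<dots> = (1 - B^2) / (2*c) + c/2"
    proof -
      have "t * (1 - B) / 2 = (1 - B^2) / (2*c)" unfolding t_def by (simp add: power2_eq_square algebra_simps)
      moreover have "(1 + B) / (2 * t) = c/2" unfolding t_def using B0 cpos by (simp add: field_simps)
      ultimately show ?thesis by (simp only:)
    qed
    also have "\<dots> \<le> c"
    proof -
      have "B^2 = exp (- S / (8*\<sigma>^2) + - S / (8*\<sigma>^2))" unfolding B_def power2_eq_square exp_add ..
      also have "- S / (8*\<sigma>^2) + - S / (8*\<sigma>^2) = - (c^2)" unfolding c2 by (simp add: field_simps)
      finally have "B^2 = exp (- (c^2))" .
      then have "1 - B^2 \<le> c^2" using exp_ge_add_one_self[of "- (c^2)"] by simp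
      then have "(1 - B^2) / (2*c) \<le> c^2 / (2*c)" using cpos by (intro divide_right_mono) auto
      also have "c^2 / (2*c) = c/2" using cpos by (simp add: power2_eq_square)
      finally show ?thesis by linarith
    qed
    finally have "integral\<^sup>L \<mu> (\<lambda>n. L n * h n) \<le> integral\<^sup>L \<mu> h + c" by simp
    then show ?thesis using com unfolding \<mu>_def c_def by simp
  qed
qed


definition Ustat :: "('l::finite \<Rightarrow> 'd::finite \<Rightarrow> real) \<Rightarrow> ('l \<Rightarrow> 'q::finite \<Rightarrow> real)
    \<Rightarrow> (nat \<Rightarrow> 'q set) \<Rightarrow> nat \<Rightarrow> ('q \<Rightarrow> real) \<Rightarrow> ('l \<Rightarrow> real) \<Rightarrow> ('l \<Rightarrow> 'l) \<Rightarrow> real" where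
  "Ustat X W S m gh n \<rho> = stab (\<lambda>j. ols_beta X W (S j) (\<lambda>i. mat_vec W gh i + n (\<rho> i))) m"

lemma pval_eq:
  "perm_pval X W S m gh M (\<lambda>i. mat_vec W gh i + n (\<rho> i)) pis
   = (real (card {i. i < M \<and> Ustat X W S m gh n \<rho> \<le> Ustat X W S m gh n (\<rho> \<circ> pis i)}) + 1) / (real M + 1)"
proof -
  have "perm_Y W gh (\<lambda>i. mat_vec W gh i + n (\<rho> i)) \<pi> = (\<lambda>i. mat_vec W gh i + n ((\<rho> \<circ> \<pi>) i))" for \<pi>
    unfolding perm_Y_def by (simp add: fun_eq_iff)
  then show ?thesis unfolding perm_pval_def Let_def Ustat_def by simp
qed

lemma avg_bound:
  fixes n :: "'l::finite \<Rightarrow> real" and X :: "'l \<Rightarrow> 'd::finite \<Rightarrow> real" and W :: "'l \<Rightarrow> 'q::finite \<Rightarrow> real"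
  assumes apos: "\<alpha> > 0"
  shows "(\<Sum>\<tau>\<in>{\<pi>::'l\<Rightarrow>'l. \<pi> permutes UNIV}. measure (perm_dist M) {pis \<in> space (perm_dist M).
            perm_pval X W S m gh M (\<lambda>i. mat_vec W gh i + (n \<circ> \<tau>) i) pis \<le> \<alpha>})
         \<le> \<alpha> * real (card {\<pi>::'l\<Rightarrow>'l. \<pi> permutes UNIV})"
proof -
  define P where "P = {\<pi>::'l\<Rightarrow>'l. \<pi> permutes UNIV}"
  define K where "K = real (card P)"
  have Kpos: "K > 0" unfolding K_def P_def using perm_set_facts[where 'l='l] by (simp add: card_gt_0_iff)
  define U where "U = Ustat X W S m gh n"
  have Mpos: "real M + 1 > 0" by simp
  have each: "measure (perm_dist M) {pis \<in> space (perm_dist M).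
            perm_pval X W S m gh M (\<lambda>i. mat_vec W gh i + (n \<circ> \<tau>) i) pis \<le> \<alpha>}
        = real (card {pis \<in> PiE {..<M} (\<lambda>_. P).
             real (card {i. i<M \<and> U \<tau> \<le> U (\<tau> \<circ> pis i)}) + 1 \<le> \<alpha> * (real M + 1)}) / K ^ M" for \<tau>
  proof -
    have sub: "PiE {..<M} (\<lambda>_. P) \<subseteq> space (perm_dist M)" unfolding space_perm_dist by (auto simp: PiE_iff)
    have "{pis \<in> space (perm_dist M). perm_pval X W S m gh M (\<lambda>i. mat_vec W gh i + (n \<circ> \<tau>) i) pis \<le> \<alpha>}
          \<inter> PiE {..<M} (\<lambda>_. P)
        = {pis \<in> PiE {..<M} (\<lambda>_. P). real (card {i. i<M \<and> U \<tau> \<le> U (\<tau> \<circ> pis i)}) + 1 \<le> \<alpha> * (real M + 1)}"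
      using sub unfolding o_apply pval_eq U_def by (auto simp: pos_divide_le_eq[OF Mpos] mult.commute)
    then show ?thesis
      using perm_dist_measure(2)[of "{pis \<in> space (perm_dist M). perm_pval X W S m gh M (\<lambda>i. mat_vec W gh i + (n \<circ> \<tau>) i) pis \<le> \<alpha>}" M]
      unfolding P_def K_def by simp
  qed
  have "(\<Sum>\<tau>\<in>P. measure (perm_dist M) {pis \<in> space (perm_dist M).
            perm_pval X W S m gh M (\<lambda>i. mat_vec W gh i + (n \<circ> \<tau>) i) pis \<le> \<alpha>})
      = real (\<Sum>\<tau>\<in>P. card {pis \<in> PiE {..<M} (\<lambda>_. P).
             real (card {i. i<M \<and> U \<tau> \<le> U (\<tau> \<circ> pis i)}) + 1 \<le> \<alpha> * (real M + 1)}) / K ^ M"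
    unfolding each by (simp add: sum_divide_distrib)
  also have "\<dots> \<le> (\<alpha> * K ^ (M+1)) / K ^ M"
    using perm_avg[OF apos, where U=U and M=M] Kpos unfolding P_def K_def by (intro divide_right_mono) auto
  also have "\<dots> = \<alpha> * K" using Kpos by simp
  finally show ?thesis unfolding P_def K_def .
qed


lemma mat_vec_split: "mat_vec W \<gamma> i + N i = mat_vec W \<gamma>h i + (N i + mat_vec W (\<lambda>k. \<gamma> k - \<gamma>h k) i)"
  unfolding mat_vec_def by (simp add: sum_subtractf right_diff_distrib)

theorem theorem2:
  fixes X :: "'l::finite \<Rightarrow> 'd::finite \<Rightarrow> real"
    and W :: "'l \<Rightarrow> 'q::finite \<Rightarrow> real"
    and \<gamma> \<gamma>h :: "'q \<Rightarrow> real"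
    and S :: "nat \<Rightarrow> 'q set"
    and m M :: nat
    and \<sigma> \<alpha> :: real
  assumes "\<sigma> > 0" and "0 < \<alpha>" and "\<alpha> < 1"
  shows "measure (gauss_noise \<sigma> \<Otimes>\<^sub>M perm_dist M)
           {(N, pis). N \<in> space (gauss_noise \<sigma>) \<and> pis \<in> space (perm_dist M) \<and>
              perm_pval X W S m \<gamma>h M (\<lambda>i. mat_vec W \<gamma> i + N i) pis \<le> \<alpha>}
         \<le> \<alpha> + sqrt (real M) * vnorm (mat_vec W (\<lambda>k. \<gamma> k - \<gamma>h k)) / (2 * \<sigma>)"
proof -
  note sp = assms(1) and apos = assms(2) and a1 = assms(3)
  define \<mu> where "\<mu> = (gauss_noise \<sigma> :: ('l \<Rightarrow> real) measure)"
  define Pd where "Pd = (perm_dist M :: (nat \<Rightarrow> 'l \<Rightarrow> 'l) measure)"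
  define \<delta> where "\<delta> = mat_vec W (\<lambda>k. \<gamma> k - \<gamma>h k)"
  define A where "A = {(N, pis). N \<in> space \<mu> \<and> pis \<in> space Pd \<and>
              perm_pval X W S m \<gamma>h M (\<lambda>i. mat_vec W \<gamma> i + N i) pis \<le> \<alpha>}"
  define c where "c = vnorm \<delta> / (2 * \<sigma>)"
  have c0: "c \<ge> 0" unfolding c_def vnorm_def using sp by (simp add: sum_nonneg)
  have rhs: "\<alpha> \<le> \<alpha> + sqrt (real M) * vnorm \<delta> / (2 * \<sigma>)"
  proof -
    have "0 \<le> sqrt (real M) * c" using c0 by simp
    then show ?thesis unfolding c_def by simp
  qed
  have goal: "measure (\<mu> \<Otimes>\<^sub>M Pd) A \<le> \<alpha> + sqrt (real M) * vnorm \<delta> / (2 * \<sigma>)"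
  proof (cases "M = 0")
    case True
    have "A = {}"
    proof -
      have "perm_pval X W S m \<gamma>h M Y pis = 1" for Y pis
        unfolding perm_pval_def Let_def True by simp
      then show ?thesis unfolding A_def using a1 by auto
    qed
    then show ?thesis using rhs apos by simp
  next
    case Mne: False
    show ?thesis
    proof (cases "A \<in> sets (\<mu> \<Otimes>\<^sub>M Pd)")
      case False
      then show ?thesis using rhs apos by (simp add: measure_notin_sets)
    next
      case Ain: True
      interpret Pd: prob_space Pd unfolding Pd_def perm_dist_def
        by (rule prob_space_PiM) (rule prob_space_measure_pmf)
      interpret mu: prob_space \<mu> unfolding \<mu>_def by (rule gauss_prob[OF sp])
      define g where "g = (\<lambda>n. measure Pd {pis \<in> space Pd. perm_pval X W S m \<gamma>h M (\<lambda>i. mat_vec W \<gamma>h i + n i) pis \<le> \<alpha>})"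
      have g01: "0 \<le> g n" "g n \<le> 1" for n unfolding g_def by simp_all
      have slice: "Pair N -` A = {pis \<in> space Pd. perm_pval X W S m \<gamma>h M (\<lambda>i. mat_vec W \<gamma>h i + (N i + \<delta> i)) pis \<le> \<alpha>}" for N
      proof -
        have fe: "(\<lambda>i. mat_vec W \<gamma> i + N i) = (\<lambda>i. mat_vec W \<gamma>h i + (N i + \<delta> i))"
          unfolding \<delta>_def by (rule ext) (rule mat_vec_split)
        show ?thesis unfolding A_def \<mu>_def by (auto simp: space_gauss fe)
      qed
      have em: "emeasure Pd (Pair N -` A) = ennreal (g (\<lambda>i. N i + \<delta> i))" for N
        unfolding slice g_def by (simp add: Pd.emeasure_eq_measure)
      have mE: "(\<lambda>N. emeasure Pd (Pair N -` A)) \<in> borel_measurable \<mu>"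
        using Pd.measurable_emeasure_Pair[OF Ain] .
      have gsm: "(\<lambda>N. g (\<lambda>i. N i + \<delta> i)) \<in> borel_measurable \<mu>"
      proof -
        have "(\<lambda>N. enn2real (emeasure Pd (Pair N -` A))) \<in> borel_measurable \<mu>" using mE by measurable
        then show ?thesis unfolding em using g01 by (simp add: enn2real_ennreal)
      qed
      have gm: "g \<in> borel_measurable \<mu>"
      proof -
        have "(\<lambda>n. (\<lambda>N. g (\<lambda>i. N i + \<delta> i)) (\<lambda>i. n i + (- \<delta> i))) \<in> borel_measurable \<mu>"
          using measurable_comp[OF shift_measurable[where d="\<lambda>i. - \<delta> i"] gsm[unfolded \<mu>_def]] unfolding \<mu>_def comp_def .
        then show ?thesis by simp
      qed
      have "measure (\<mu> \<Otimes>\<^sub>M Pd) A = enn2real (emeasure (\<mu> \<Otimes>\<^sub>M Pd) A)" by (simp add: measure_def)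
      also have "emeasure (\<mu> \<Otimes>\<^sub>M Pd) A = (\<integral>\<^sup>+ N. emeasure Pd (Pair N -` A) \<partial>\<mu>)"
        by (rule Pd.emeasure_pair_measure_alt[OF Ain])
      also have "enn2real \<dots> = integral\<^sup>L \<mu> (\<lambda>N. g (\<lambda>i. N i + \<delta> i))"
        using gsm g01 by (intro enn2real_nn_integral_eq_integral) (auto simp: em)
      also have "\<dots> \<le> integral\<^sup>L \<mu> g + c"
        unfolding \<mu>_def c_def by (rule gauss_shift_bound[OF sp gm[unfolded \<mu>_def] g01])
      also have "integral\<^sup>L \<mu> g \<le> \<alpha>"
      proof -
        define P where "P = {\<pi>::'l\<Rightarrow>'l. \<pi> permutes UNIV}"
        define K where "K = real (card P)"
        have Kpos: "K > 0" unfolding K_def P_def using perm_set_facts[where 'l='l] by (simp add: card_gt_0_iff)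
        have gint: "integrable \<mu> (\<lambda>n. g (n \<circ> \<tau>))" for \<tau>
        proof (rule mu.integrable_const_bound[where B=1])
          show "AE x in \<mu>. norm (g (x \<circ> \<tau>)) \<le> 1" using g01 by simp
          show "(\<lambda>n. g (n \<circ> \<tau>)) \<in> borel_measurable \<mu>"
            using measurable_comp[OF perm_comp_measurable gm[unfolded \<mu>_def]] unfolding \<mu>_def comp_def .
        qed
        have "K * integral\<^sup>L \<mu> g = (\<Sum>\<tau>\<in>P. integral\<^sup>L \<mu> g)" unfolding K_def by simp
        also have "\<dots> = (\<Sum>\<tau>\<in>P. integral\<^sup>L \<mu> (\<lambda>n. g (n \<circ> \<tau>)))"
          by (rule sum.cong[OF refl], unfold \<mu>_def P_def, rule gauss_perm_inv[OF sp _ gm[unfolded \<mu>_def], symmetric]) simp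
        also have "\<dots> = integral\<^sup>L \<mu> (\<lambda>n. \<Sum>\<tau>\<in>P. g (n \<circ> \<tau>))"
          using Bochner_Integration.integral_sum[where I=P and M=\<mu> and f="\<lambda>\<tau> n. g (n \<circ> \<tau>)"] gint by simp
        also have "\<dots> \<le> integral\<^sup>L \<mu> (\<lambda>n. \<alpha> * K)"
        proof (rule integral_mono)
          show "integrable \<mu> (\<lambda>n. \<Sum>\<tau>\<in>P. g (n \<circ> \<tau>))" using gint by simp
          show "integrable \<mu> (\<lambda>n. \<alpha> * K)" by simp
          fix n
          show "(\<Sum>\<tau>\<in>P. g (n \<circ> \<tau>)) \<le> \<alpha> * K"
            using avg_bound[OF apos, where n=n and X=X and W=W and S=S and m=m and gh=\<gamma>h and M=M]
            unfolding g_def Pd_def P_def K_def by simp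
        qed
        also have "\<dots> = \<alpha> * K" by (simp add: mu.prob_space)
        finally have "K * integral\<^sup>L \<mu> g \<le> K * \<alpha>" by (simp add: mult.commute)
        then show ?thesis using Kpos by simp
      qed
      also have "\<alpha> + c \<le> \<alpha> + sqrt (real M) * vnorm \<delta> / (2 * \<sigma>)"
      proof -
        have "1 \<le> sqrt (real M)" using Mne by simp
        then have "1 * c \<le> sqrt (real M) * c" using c0 by (intro mult_right_mono) auto
        then show ?thesis unfolding c_def by simp
      qed
      finally show ?thesis by simp
    qed
  qed
  then show ?thesis unfolding \<mu>_def Pd_def A_def \<delta>_def .
qed


end
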